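(* Let $W:\mathbb{R}^{3\times2}_+\to[0,\infty)$ be continuously differentiable and satisfy (H4): there is a constant $K>0$ such that $|W_F(\bm F)\bm F^T|\le K(W(\bm F)+1)$ for all $\bm F\in\mathbb{R}^{3\times2}_+$. Let $V\subset\mathbb{R}^3$ be a $2$-dimensional subspace, $\bm 1$ the identity on $V$, and $\bm T\in L(V)$. If $|\bm T-\bm 1|<\delta$ with $\delta>0$ sufficiently small, then there is a constant $C>0$ such that $|W_F(\bm T\bm A)\bm A^T|\le C(W(\bm A)+1)$ for all $\bm A\in L(\mathbb{R}^2,V)\cap\mathbb{R}^{3\times2}_+$.
   Context: $\mathbb{R}^{3\times2}_+:=\{\bm F\in\mathbb{R}^{3\times2}:\det(\bm F^T\bm F)>0\}$ (an open subset of $\mathbb{R}^{3\times2}$); $W_F$ denotes the derivative of $W$ with respect to $\bm F$, a $3\times2$ matrix; $|\cdot|$ is the Frobenius norm (so $|\bm 1|=\sqrt2$). Elements of $L(\mathbb{R}^2,V)$ are identified with $3\times2$ matrices whose columns lie in $V$. *)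

theory Defs
  imports "HOL-Analysis.Analysis"
begin

text \<open>3x2 real matrices are modelled as real^2^3 (3 rows, 2 columns);
  the norm on this type is the Frobenius norm.\<close>

definition Rplus32 :: "(real^2^3) set" where
  "Rplus32 = {F. det (transpose F ** F) > 0}"

definition orthonormal_basis_of :: "(real^3) set \<Rightarrow> (real^3) set \<Rightarrow> bool" where
  "orthonormal_basis_of V B \<longleftrightarrow> B \<subseteq> V \<and> pairwise orthogonal B \<and> (\<forall>x\<in>B. norm x = 1) \<and> span B = V"

text \<open>Frobenius norm of a linear map L restricted to V (computed in an orthonormal basis of V;
  it is independent of the chosen basis).\<close>
definition frob_norm_on :: "(real^3) set \<Rightarrow> (real^3 \<Rightarrow> real^3) \<Rightarrow> real" where
  "frob_norm_on V L = sqrt (\<Sum>b\<in>(SOME B. orthonormal_basis_of V B). (norm (L b))\<^sup>2)"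

end

theory Submission
  imports Defs
begin


lemma rows_mult: fixes G A :: "real^2^3"
  shows "(G ** transpose A) $ i = A *v (G $ i)"
  by (simp add: vec_eq_iff matrix_matrix_mult_def matrix_vector_mult_def transpose_def mult.commute)

lemma inner_swap: fixes G A :: "real^2^3" and N :: "real^3^3"
  shows "G \<bullet> (N ** A) = N \<bullet> (G ** transpose A)"
proof -
  have "G \<bullet> (N ** A) = (\<Sum>i\<in>UNIV. \<Sum>j\<in>UNIV. \<Sum>k\<in>UNIV. G$i$j * (N$i$k * A$k$j))"
    by (simp add: inner_vec_def matrix_matrix_mult_def sum_distrib_left)
  also have "\<dots> = (\<Sum>i\<in>UNIV. \<Sum>k\<in>UNIV. \<Sum>j\<in>UNIV. N$i$k * (G$i$j * A$k$j))"
    by (rule sum.cong[OF refl], subst sum.swap) (simp add: algebra_simps)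
  also have "\<dots> = N \<bullet> (G ** transpose A)"
    by (simp add: inner_vec_def matrix_matrix_mult_def sum_distrib_left transpose_def)
  finally show ?thesis .
qed

lemma norm_sq_rows: fixes X :: "real^'n^'m" shows "(norm X)\<^sup>2 = (\<Sum>i\<in>UNIV. (norm (X$i))\<^sup>2)"
  by (simp add: norm_vec_def L2_set_def sum_nonneg)

lemma rows_le: fixes X Y :: "real^'n^'m" assumes "\<And>i. norm (X$i) \<le> c * norm (Y$i)" "c \<ge> 0"
  shows "norm X \<le> c * norm Y"
proof (rule power2_le_imp_le)
  have "(norm X)\<^sup>2 \<le> (\<Sum>i\<in>UNIV. (c * norm (Y$i))\<^sup>2)"
    unfolding norm_sq_rows by (rule sum_mono, rule power_mono[OF assms(1)], simp)
  also have "\<dots> = (c * norm Y)\<^sup>2" by (simp add: power_mult_distrib norm_sq_rows sum_distrib_left)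
  finally show "(norm X)\<^sup>2 \<le> (c * norm Y)\<^sup>2" .
  show "0 \<le> c * norm Y" using assms(2) by simp
qed

lemma gram_entry: fixes F :: "real^2^3"
  shows "(transpose F ** F) $ i $ j = column i F \<bullet> column j F"
  by (simp add: matrix_matrix_mult_def transpose_def column_def inner_vec_def)

lemma gram_det_nonneg: fixes F :: "real^2^3"
  shows "det (transpose F ** F) \<ge> 0"
proof -
  have "(column 1 F \<bullet> column 2 F)\<^sup>2 \<le> (column 1 F \<bullet> column 1 F) * (column 2 F \<bullet> column 2 F)"
    by (rule Cauchy_Schwarz_ineq)
  then show ?thesis by (simp add: det_2 gram_entry inner_commute power2_eq_square)
qed

lemma gram_quad: fixes F :: "real^2^3"
  shows "y \<bullet> ((transpose F ** F) *v y) = (F *v y) \<bullet> (F *v y)"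
proof -
  have "(transpose F ** F) *v y = (F *v y) v* F"
    by (simp add: matrix_vector_mul_assoc[symmetric])
  then show ?thesis by (simp add: inner_commute[of y] dot_lmul_matrix)
qed

lemma Rplus32_iff: fixes F :: "real^2^3"
  shows "F \<in> Rplus32 \<longleftrightarrow> (\<forall>x. F *v x = 0 \<longrightarrow> x = 0)"
proof -
  have e1: "det (transpose F ** F) \<noteq> 0 \<longleftrightarrow> inj ((*v) (transpose F ** F))"
    using det_nz_iff_inj[of "(*v) (transpose F ** F)"] matrix_of_matrix_vector_mul[of "transpose F ** F"]
      matrix_vector_mul_linear[of "transpose F ** F"] by metis
  have e2: "inj ((*v) (transpose F ** F)) \<longleftrightarrow> (\<forall>x. F *v x = 0 \<longrightarrow> x = 0)"
  proof
    assume inj: "inj ((*v) (transpose F ** F))"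
    show "\<forall>x. F *v x = 0 \<longrightarrow> x = 0"
    proof (intro allI impI)
      fix x assume "F *v x = 0"
      then have "(transpose F ** F) *v x = (transpose F ** F) *v 0"
        by (simp only: matrix_vector_mul_assoc[symmetric] matrix_vector_mult_0_right)
      then show "x = 0" using inj unfolding inj_def by blast
    qed
  next
    assume H: "\<forall>x. F *v x = 0 \<longrightarrow> x = 0"
    show "inj ((*v) (transpose F ** F))"
    proof (rule injI)
      fix x y assume "(transpose F ** F) *v x = (transpose F ** F) *v y"
      then have "(transpose F ** F) *v (x - y) = 0" by (simp add: matrix_vector_mult_diff_distrib)
      then have "(F *v (x-y)) \<bullet> (F *v (x-y)) = 0" using gram_quad[of "x-y" F] by simp
      then have "F *v (x-y) = 0" by simp
      then have "x - y = 0" using H by blast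
      then show "x = y" by simp
    qed
  qed
  have "F \<in> Rplus32 \<longleftrightarrow> det (transpose F ** F) \<noteq> 0"
    unfolding Rplus32_def using gram_det_nonneg[of F] by auto
  then show ?thesis using e1 e2 by simp
qed

lemma frob_bound:
  fixes L :: "real^3 \<Rightarrow> real^3"
  assumes V: "subspace V" and L: "linear L" and v: "v \<in> V"
  shows "norm (L v) \<le> frob_norm_on V L * norm v"
proof -
  define Bs where "Bs = (SOME B. orthonormal_basis_of V B)"
  have "\<exists>B. orthonormal_basis_of V B"
    using orthonormal_basis_subspace[OF V] unfolding orthonormal_basis_of_def by metis
  then have ob: "orthonormal_basis_of V Bs" unfolding Bs_def by (rule someI_ex)
  then have sub: "Bs \<subseteq> V" and po: "pairwise orthogonal Bs" and n1: "\<And>x. x \<in> Bs \<Longrightarrow> norm x = 1"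
    and sp: "span Bs = V" unfolding orthonormal_basis_of_def by auto
  have "0 \<notin> Bs" using n1 by force
  then have "independent Bs" using pairwise_orthogonal_independent po by blast
  then have fin: "finite Bs" using independent_imp_finite by blast
  from v sp have "v \<in> span Bs" by simp
  then obtain c where vc: "v = (\<Sum>b\<in>Bs. c b *\<^sub>R b)"
    using span_finite[OF fin] by auto
  have cb: "v \<bullet> b = c b" if "b \<in> Bs" for b
  proof -
    have "v \<bullet> b = (\<Sum>b'\<in>Bs. c b' * (b' \<bullet> b))" by (simp add: vc inner_sum_left)
    also have "\<dots> = c b * (b \<bullet> b) + (\<Sum>b'\<in>Bs - {b}. c b' * (b' \<bullet> b))"
      using fin that by (simp add: sum.remove)
    also have "(\<Sum>b'\<in>Bs - {b}. c b' * (b' \<bullet> b)) = 0"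
      using po that by (intro sum.neutral) (auto simp: pairwise_def orthogonal_def)
    also have "b \<bullet> b = 1" using n1[OF that] by (simp add: norm_eq_1)
    finally show ?thesis by simp
  qed
  have nv: "norm v = L2_set c Bs"
  proof -
    have "v \<bullet> v = (\<Sum>b\<in>Bs. c b * (v \<bullet> b))" by (subst (2) vc) (simp add: inner_sum_right)
    also have "\<dots> = (\<Sum>b\<in>Bs. (c b)\<^sup>2)" by (rule sum.cong) (auto simp: cb power2_eq_square)
    finally show ?thesis by (simp add: L2_set_def norm_eq_sqrt_inner)
  qed
  have "L v = (\<Sum>b\<in>Bs. c b *\<^sub>R L b)"
    by (simp add: vc linear_sum[OF L] linear_scale[OF L])
  then have "norm (L v) \<le> (\<Sum>b\<in>Bs. \<bar>c b\<bar> * \<bar>norm (L b)\<bar>)"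
    by (auto intro!: order_trans[OF norm_sum] sum_mono)
  also have "\<dots> \<le> L2_set c Bs * L2_set (\<lambda>b. norm (L b)) Bs" by (rule L2_set_mult_ineq)
  also have "L2_set (\<lambda>b. norm (L b)) Bs = frob_norm_on V L"
    by (simp add: frob_norm_on_def L2_set_def Bs_def)
  finally show ?thesis using nv by (simp add: mult.commute)
qed

lemma mat_diff_mult: fixes X Y :: "real^3^3" and A :: "real^2^3"
  shows "(X - Y) ** A = X ** A - Y ** A"
  by (simp add: vec_eq_iff matrix_matrix_mult_def algebra_simps sum_subtractf)

lemma scaleR_mv: fixes D :: "real^'n^'m" shows "(t *\<^sub>R D) *v x = t *\<^sub>R (D *v x)"
  by (simp add: vec_eq_iff matrix_vector_mult_def sum_distrib_left algebra_simps)

lemma col_in_V: fixes A :: "real^2^3"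
  assumes "subspace V" "\<forall>j. column j A \<in> V" shows "A *v x \<in> V"
  unfolding matrix_mult_sum scalar_mult_eq_scaleR
  using assms by (intro subspace_sum subspace_scale) auto

theorem lemma10:
  fixes W :: "real^2^3 \<Rightarrow> real"
    and WF :: "real^2^3 \<Rightarrow> real^2^3"
    and K :: real
    and V :: "(real^3) set"
  assumes W_nonneg: "\<And>F. F \<in> Rplus32 \<Longrightarrow> W F \<ge> 0"
    and W_deriv: "\<And>F. F \<in> Rplus32 \<Longrightarrow> (W has_derivative (\<lambda>H. WF F \<bullet> H)) (at F)"
    and WF_cont: "continuous_on Rplus32 WF"
    and K_pos: "K > 0"
    and H4: "\<And>F. F \<in> Rplus32 \<Longrightarrow> norm (WF F ** transpose F) \<le> K * (W F + 1)"
    and V_sub: "subspace V"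
    and V_dim: "dim V = 2"
  shows "\<exists>\<delta>>0. \<forall>T :: real^3 \<Rightarrow> real^3.
           linear T \<and> T ` V \<subseteq> V \<and> frob_norm_on V (\<lambda>x. T x - x) < \<delta> \<longrightarrow>
           (\<exists>C>0. \<forall>A :: real^2^3. (\<forall>j. column j A \<in> V) \<and> A \<in> Rplus32 \<longrightarrow>
               norm (WF (matrix T ** A) ** transpose A) \<le> C * (W A + 1))"
proof (rule exI[of _ "1/2"], intro conjI allI impI)
  show "(0::real) < 1/2" by simp
  fix T :: "real^3 \<Rightarrow> real^3"
  assume "linear T \<and> T ` V \<subseteq> V \<and> frob_norm_on V (\<lambda>x. T x - x) < 1/2"
  then have linT: "linear T" and fsmall: "frob_norm_on V (\<lambda>x. T x - x) < 1/2" by auto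
  define f where "f = frob_norm_on V (\<lambda>x. T x - x)"
  have linL: "linear (\<lambda>x. T x - x)" using linT by (intro linear_compose_sub linear_ident)
  have Lb: "norm (T y - y) \<le> f * norm y" if "y \<in> V" for y
    unfolding f_def using frob_bound[OF V_sub linL that] .
  define N where "N = matrix T - mat 1"
  have Nv: "N *v y = T y - y" for y
    unfolding N_def using matrix_works[of T] linT
    by (simp add: matrix_vector_mult_diff_rdistrib linear_matrix_vector_mul_eq)
  define M where "M = 2 * K * norm N"
  show "\<exists>C>0. \<forall>A :: real^2^3. (\<forall>j. column j A \<in> V) \<and> A \<in> Rplus32 \<longrightarrow>
               norm (WF (matrix T ** A) ** transpose A) \<le> C * (W A + 1)"
  proof (intro exI[of _ "2 * K * exp M"] conjI allI impI)
    show "0 < 2 * K * exp M" using K_pos by simp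
    fix A :: "real^2^3"
    assume HA: "(\<forall>j. column j A \<in> V) \<and> A \<in> Rplus32"
    then have colA: "\<forall>j. column j A \<in> V" and AR: "A \<in> Rplus32" by auto
    define D where "D = N ** A"
    define B where "B = (\<lambda>t::real. A + t *\<^sub>R D)"
    have B1: "B 1 = matrix T ** A"
      unfolding B_def D_def N_def by (simp add: mat_diff_mult)
    have Bv: "B t *v x = A *v x + t *\<^sub>R (T (A *v x) - A *v x)" for t x
      unfolding B_def D_def
      by (simp add: matrix_vector_mult_add_rdistrib matrix_vector_mul_assoc[symmetric] Nv scaleR_mv)
    have lowb: "norm (A *v x) \<le> 2 * norm (B t *v x)" if t: "0 \<le> t" "t \<le> 1" for t x
    proof -
      define y where "y = A *v x"
      have yV: "y \<in> V" unfolding y_def by (rule col_in_V[OF V_sub colA])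
      have "norm (t *\<^sub>R (T y - y)) \<le> 1 * (f * norm y)"
        using t Lb[OF yV] mult_mono[of t 1 "norm (T y - y)" "f * norm y"] by simp
      moreover have "norm y - norm (t *\<^sub>R (T y - y)) \<le> norm (y + t *\<^sub>R (T y - y))"
        by (metis norm_diff_ineq norm_minus_cancel diff_minus_eq_add)
      ultimately have "norm y - f * norm y \<le> norm (B t *v x)" unfolding Bv y_def by linarith
      moreover have "f * norm y \<le> 1/2 * norm y" using fsmall f_def mult_right_mono[of f "1/2" "norm y"] by simp
      ultimately show ?thesis unfolding y_def by linarith
    qed
    have BR: "B t \<in> Rplus32" if "0 \<le> t" "t \<le> 1" for t
      unfolding Rplus32_iff
    proof (intro allI impI)
      fix x assume "B t *v x = 0"
      then have "A *v x = 0" using lowb[OF that, of x] by simp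
      then show "x = 0" using AR unfolding Rplus32_iff by blast
    qed
    have rowb: "norm (G ** transpose A) \<le> 2 * norm (G ** transpose (B t))" if "0 \<le> t" "t \<le> 1" for t and G :: "real^2^3"
      by (rule rows_le) (simp_all add: rows_mult lowb[OF that])
    define h where "h = (\<lambda>t. ln (W (B t) + 1))"
    define h' where "h' = (\<lambda>t. (WF (B t) \<bullet> D) / (W (B t) + 1))"
    have dh: "(h has_real_derivative h' t) (at t)" if "0 \<le> t \<and> t \<le> 1" for t
    proof -
      have Bd: "(B has_derivative (\<lambda>s. s *\<^sub>R D)) (at t)"
        unfolding B_def by (auto intro!: derivative_eq_intros)
      have "((W \<circ> B) has_derivative ((\<lambda>H. WF (B t) \<bullet> H) \<circ> (\<lambda>s. s *\<^sub>R D))) (at t)"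
        by (rule diff_chain_at[OF Bd W_deriv[OF BR]]) (use that in auto)
      moreover have "((\<lambda>H. WF (B t) \<bullet> H) \<circ> (\<lambda>s. s *\<^sub>R D)) = (*) (WF (B t) \<bullet> D)"
        by (auto simp: fun_eq_iff)
      ultimately have dW: "((\<lambda>t. W (B t)) has_real_derivative (WF (B t) \<bullet> D)) (at t)"
        by (simp add: has_field_derivative_def comp_def)
      have pos: "W (B t) + 1 > 0" using W_nonneg[OF BR] that by force
      show ?thesis unfolding h_def h'_def
        by (rule derivative_eq_intros dW refl | use pos in simp)+
    qed
    have h'b: "h' t \<le> M" if "0 \<le> t" "t \<le> 1" for t
    proof -
      have pos: "W (B t) + 1 > 0" using W_nonneg[OF BR[OF that]] by force
      have "WF (B t) \<bullet> D = N \<bullet> (WF (B t) ** transpose A)" unfolding D_def by (rule inner_swap)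
      also have "\<dots> \<le> norm N * norm (WF (B t) ** transpose A)"
        using Cauchy_Schwarz_ineq2[of N "WF (B t) ** transpose A"] by (simp add: abs_le_iff)
      also have "\<dots> \<le> norm N * (2 * norm (WF (B t) ** transpose (B t)))"
        by (rule mult_left_mono[OF rowb[OF that]]) simp
      also have "\<dots> \<le> norm N * (2 * (K * (W (B t) + 1)))"
        using H4[OF BR[OF that]] by (intro mult_left_mono) auto
      also have "\<dots> = M * (W (B t) + 1)" unfolding M_def by simp
      finally show ?thesis unfolding h'_def using pos by (simp add: divide_le_eq)
    qed
    have dh': "\<And>x. 0 \<le> x \<Longrightarrow> x \<le> 1 \<Longrightarrow> (h has_real_derivative h' x) (at x)"
      using dh by blast
    obtain z where z: "0 < z" "z < 1" "h 1 - h 0 = (1 - 0) * h' z"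
      using MVT2[OF zero_less_one dh'] by blast
    then have "h 1 \<le> h 0 + M" using h'b[of z] by simp
    then have "exp (h 1) \<le> exp (h 0 + M)" by simp
    moreover have "exp (h s) = W (B s) + 1" if "0 \<le> s" "s \<le> 1" for s
      unfolding h_def using W_nonneg[OF BR[OF that]] by simp
    ultimately have Wb: "W (B 1) + 1 \<le> exp M * (W A + 1)"
    proof -
      assume a1: "exp (h 1) \<le> exp (h 0 + M)" and a2: "\<And>s. 0 \<le> s \<Longrightarrow> s \<le> 1 \<Longrightarrow> exp (h s) = W (B s) + 1"
      have "B 0 = A" unfolding B_def by simp
      then have "exp (h 0 + M) = exp M * (W A + 1)" using a2[of 0] by (simp add: exp_add)
      then show ?thesis using a1 a2[of 1] by simp
    qed
    have "norm (WF (matrix T ** A) ** transpose A) \<le> 2 * norm (WF (B 1) ** transpose (B 1))"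
      using rowb[of 1 "WF (B 1)"] unfolding B1 by simp
    also have "\<dots> \<le> 2 * (K * (W (B 1) + 1))" using H4[OF BR[of 1]] by (simp add: B1)
    also have "\<dots> \<le> 2 * (K * (exp M * (W A + 1)))"
      using Wb K_pos by (intro mult_left_mono) auto
    finally show "norm (WF (matrix T ** A) ** transpose A) \<le> 2 * K * exp M * (W A + 1)"
      by (simp add: mult.assoc)
  qed
qed

end
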